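(* Let $(\Xi,d_\Xi)$ be a metric space, let $\{P^\nu\}_{\nu\in\mathbb{N}}$ be probabilities on $(\Xi,\mathcal{B}(\Xi))$ converging weakly to a probability $P$, and let $\{h^\nu\}_{\nu\in\mathbb{N}}$ be measurable $\overline{\mathbb{R}}$-valued functions on $\Xi$ such that $$\liminf_{K\to+\infty}\ \liminf_{\nu\to+\infty}\mathbb{E}^{P^\nu}\big[h^\nu(\xi)\,\mathbb{1}\{\xi:h^\nu(\xi)\le -K\}\big]=0.$$ Then $$\liminf_{\nu\to+\infty}\mathbb{E}^{P^\nu}\big[h^\nu(\xi)\big]\ \ge\ \mathbb{E}^{P}\Big[\liminf_{(\nu,\zeta)\to(+\infty,\xi)}h^\nu(\zeta)\Big].$$
   Context: $\overline{\mathbb{R}}=\mathbb{R}\cup\{-\infty,+\infty\}$; $\mathcal{B}(\Xi)$ is the Borel $\sigma$-algebra; weak convergence means $\int\varphi\,dP^\nu\to\int\varphi\,dP$ for all bounded continuous $\varphi$. For a probability $\mu$ and measurable $\overline{\mathbb{R}}$-valued $g$, $\mathbb{E}^\mu[g]:=\int g_+\,d\mu-\int g_-\,d\mu$ with conventions $+\infty-\alpha=+\infty$ for all $\alpha\in\overline{\mathbb{R}}$ (in particular the expectation equals $+\infty$ when both $\int g_+$ and $\int g_-$ are $+\infty$) and $\beta-(+\infty)=-\infty$ for $\beta\in\mathbb{R}$. $\mathbb{1}\{B\}$ is the indicator of $B$. $\liminf_{(\nu,\zeta)\to(+\infty,\xi)}h^\nu(\zeta):=\lim_{\delta\downarrow0}\lim_{N\to\infty}\inf\{h^\nu(\zeta):\nu\ge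 N,\ d_\Xi(\zeta,\xi)<\delta\}$. *)

theory Defs
  imports "HOL-Probability.Probability"
begin

definition ext_expectation :: "'a measure \<Rightarrow> ('a \<Rightarrow> ereal) \<Rightarrow> ereal" where
  "ext_expectation \<mu> g =
     (let pos = (\<integral>\<^sup>+ x. e2ennreal (g x) \<partial>\<mu>);
          neg = (\<integral>\<^sup>+ x. e2ennreal (- g x) \<partial>\<mu>)
      in if pos = \<infinity> then \<infinity> else enn2ereal pos - enn2ereal neg)"

definition weak_conv_measures :: "(nat \<Rightarrow> 'a::topological_space measure) \<Rightarrow> 'a measure \<Rightarrow> bool" where
  "weak_conv_measures Ps P \<longleftrightarrow>
     (\<forall>\<phi> :: 'a \<Rightarrow> real. continuous_on UNIV \<phi> \<and> bounded (range \<phi>) \<longrightarrow>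
        (\<lambda>n. \<integral>x. \<phi> x \<partial>Ps n) \<longlonglongrightarrow> (\<integral>x. \<phi> x \<partial>P))"

text \<open>liminf_{(nu,zeta) -> (+infinity, xi)} h^nu(zeta)
  = lim_{delta -> 0+} lim_{N -> infinity} inf { h^nu(zeta) : nu >= N, d(zeta,xi) < delta }.
  Both limits are of monotone (nondecreasing) families in the complete lattice of extended
  reals, hence equal to the corresponding suprema.\<close>
definition epi_liminf :: "(nat \<Rightarrow> 'a::metric_space \<Rightarrow> ereal) \<Rightarrow> 'a \<Rightarrow> ereal" where
  "epi_liminf h \<xi> =
     (SUP \<delta>\<in>{0<..}. SUP N. INF p \<in> {(\<nu>, \<zeta>). \<nu> \<ge> N \<and> dist \<zeta> \<xi> < (\<delta>::real)}. h (fst p) (snd p))"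

end

theory Submission
  imports Defs
begin

lemma enn2ereal_e2ennreal_max: "enn2ereal (e2ennreal x) = max 0 x"
  by (cases "0 \<le> x") (auto simp: enn2ereal_e2ennreal e2ennreal_neg zero_ennreal.rep_eq)

lemma enn2ereal_ennreal_max: "enn2ereal (ennreal r) = ereal (max 0 r)"
  by (metis e2ennreal_ereal enn2ereal_e2ennreal_max max_def zero_ereal_def ereal_less_eq(3))

lemma ennreal_le_via_ereal: "enn2ereal a \<le> enn2ereal b \<Longrightarrow> a \<le> b"
  by (simp add: less_eq_ennreal.rep_eq)

lemma pw1:
  fixes g :: ereal and K :: real
  assumes "0 \<le> K"
  shows "e2ennreal (g + ereal K) + e2ennreal (- g) \<le> e2ennreal g + ennreal K + e2ennreal (- (if g \<le> - ereal K then g else 0))"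
  apply (rule ennreal_le_via_ereal)
  using assms
  by (cases g) (auto simp: plus_ennreal.rep_eq enn2ereal_e2ennreal_max enn2ereal_ennreal_max max_def)

lemma pw2:
  fixes g :: ereal and K :: real
  assumes "0 \<le> K"
  shows "e2ennreal g + ennreal K \<le> e2ennreal (g + ereal K) + e2ennreal (- g)"
  apply (rule ennreal_le_via_ereal)
  using assms
  by (cases g) (auto simp: plus_ennreal.rep_eq enn2ereal_e2ennreal_max enn2ereal_ennreal_max max_def)

lemma pw3:
  fixes g :: ereal and K :: real
  assumes "0 \<le> K"
  shows "e2ennreal (g + ereal K) \<le> e2ennreal g + ennreal K"
  apply (rule ennreal_le_via_ereal)
  using assms
  by (cases g) (auto simp: plus_ennreal.rep_eq enn2ereal_e2ennreal_max enn2ereal_ennreal_max max_def)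

lemma meas_if: assumes g[measurable]: "g \<in> borel_measurable M"
  shows "(\<lambda>x. (if g x \<le> - ereal K then g x else 0)) \<in> borel_measurable M" by measurable

lemma meas_aux:
  assumes g[measurable]: "g \<in> borel_measurable M"
  shows "(\<lambda>x. e2ennreal (g x + ereal K)) \<in> borel_measurable M"
    "(\<lambda>x. e2ennreal (g x)) \<in> borel_measurable M"
    "(\<lambda>x. e2ennreal (- g x)) \<in> borel_measurable M"
    "(\<lambda>x. e2ennreal (- (if g x \<le> - ereal K then g x else 0))) \<in> borel_measurable M"
  subgoal by measurable
  subgoal by measurable
  subgoal by measurable
  subgoal using measurable_compose[OF borel_measurable_uminus_ereal[OF meas_if[OF g]] measurable_e2ennreal] by simp
  done

lemma gl:
  fixes N N1 :: ereal and a b K :: real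
  assumes "0 \<le> N" "0 \<le> N1" "ereal b + N \<le> ereal a + ereal K + N1"
  shows "(ereal b - ereal K) + - N1 \<le> ereal a - N"
proof (cases N1)
  case (real c1)
  then show ?thesis using assms by (cases N) auto
next
  case PInf
  then show ?thesis by simp
next
  case MInf
  then show ?thesis using assms by simp
qed

lemma ext_exp_split:
  assumes M: "prob_space M" and g: "g \<in> borel_measurable M" and K: "0 \<le> K"
  shows "(enn2ereal (\<integral>\<^sup>+x. e2ennreal (g x + ereal K) \<partial>M) - ereal K)
     + ext_expectation M (\<lambda>x. if g x \<le> - ereal K then g x else 0) \<le> ext_expectation M g"
proof -
  interpret prob_space M by fact
  define p where "p = (\<integral>\<^sup>+x. e2ennreal (g x) \<partial>M)"
  define n where "n = (\<integral>\<^sup>+x. e2ennreal (- g x) \<partial>M)"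
  define q where "q = (\<integral>\<^sup>+x. e2ennreal (g x + ereal K) \<partial>M)"
  define n1 where "n1 = (\<integral>\<^sup>+x. e2ennreal (- (if g x \<le> - ereal K then g x else 0)) \<partial>M)"
  have p1: "(\<integral>\<^sup>+x. e2ennreal (if g x \<le> - ereal K then g x else 0) \<partial>M) = 0"
  proof -
    have "\<And>x. e2ennreal (if g x \<le> - ereal K then g x else 0) = 0"
      using K by (intro e2ennreal_neg) (auto intro: order.trans[of _ "- ereal K"])
    then show ?thesis by simp
  qed
  have E1: "ext_expectation M (\<lambda>x. if g x \<le> - ereal K then g x else 0) = - enn2ereal n1"
    unfolding ext_expectation_def Let_def p1 n1_def by (simp add: zero_ennreal.rep_eq)
  have E: "ext_expectation M g = (if p = \<infinity> then \<infinity> else enn2ereal p - enn2ereal n)"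
    unfolding ext_expectation_def p_def n_def Let_def by simp
  have cK: "(\<integral>\<^sup>+x. ennreal K \<partial>M) = ennreal K"
    by (simp add: emeasure_space_1)
  have "q + n = (\<integral>\<^sup>+x. e2ennreal (g x + ereal K) + e2ennreal (- g x) \<partial>M)"
    unfolding q_def n_def by (rule nn_integral_add[symmetric]) (use g in \<open>simp_all add: meas_aux\<close>)
  also have "\<dots> \<le> (\<integral>\<^sup>+x. e2ennreal (g x) + ennreal K + e2ennreal (- (if g x \<le> - ereal K then g x else 0)) \<partial>M)"
    by (rule nn_integral_mono) (rule pw1[OF K])
  also have "\<dots> = (\<integral>\<^sup>+x. e2ennreal (g x) + ennreal K \<partial>M) + n1"
  proof -
    have m1: "(\<lambda>x. e2ennreal (g x) + ennreal K) \<in> borel_measurable M" using meas_aux(2)[OF g] by measurable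
    show ?thesis unfolding n1_def by (rule nn_integral_add[OF m1 meas_aux(4)[OF g]])
  qed
  also have "\<dots> = p + ennreal K + n1"
    unfolding p_def
    by (simp add: nn_integral_add meas_aux[OF g] cK emeasure_space_1)
  finally have ineq: "q + n \<le> p + ennreal K + n1" .
  have "q \<le> (\<integral>\<^sup>+x. e2ennreal (g x) + ennreal K \<partial>M)"
    unfolding q_def by (rule nn_integral_mono) (rule pw3[OF K])
  also have "\<dots> = p + ennreal K"
    unfolding p_def by (simp add: nn_integral_add meas_aux[OF g] cK emeasure_space_1)
  finally have qle: "q \<le> p + ennreal K" .
  show ?thesis
  proof (cases "p = \<infinity>")
    case True
    then show ?thesis unfolding E by simp
  next
    case False
    then obtain a where a: "enn2ereal p = ereal a" "0 \<le> a"
      by (cases p) auto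
    have ineq': "enn2ereal q + enn2ereal n \<le> ereal a + ereal K + enn2ereal n1"
      using ineq a K by (simp add: less_eq_ennreal.rep_eq plus_ennreal.rep_eq)
    have "enn2ereal q \<le> ereal a + ereal K"
      using qle a K by (simp add: less_eq_ennreal.rep_eq plus_ennreal.rep_eq)
    then obtain b where b: "enn2ereal q = ereal b"
      using enn2ereal_nonneg[of q] by (cases "enn2ereal q") auto
    have gl: "(ereal b - ereal K) + - enn2ereal n1 \<le> ereal a - enn2ereal n"
      using ineq' b enn2ereal_nonneg[of n] enn2ereal_nonneg[of n1] by (intro gl) auto
    have L: "(enn2ereal q - ereal K) + ext_expectation M (\<lambda>x. if g x \<le> - ereal K then g x else 0)
        = (ereal b - ereal K) + - enn2ereal n1" by (simp only: E1 b)
    have R: "ext_expectation M g = ereal a - enn2ereal n"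
      by (simp only: E if_not_P[OF False] a)
    have "(enn2ereal q - ereal K) + ext_expectation M (\<lambda>x. if g x \<le> - ereal K then g x else 0)
        \<le> ext_expectation M g" unfolding L R by (rule gl)
    then show ?thesis by (simp only: q_def)
  qed
qed

lemma gl2:
  fixes N Q :: ereal and a K :: real
  assumes "0 \<le> N" "0 \<le> Q" "ereal a + ereal K \<le> Q + N"
  shows "ereal a - N \<le> Q - ereal K"
proof (cases N)
  case (real c1)
  then show ?thesis using assms by (cases Q) auto
next
  case PInf
  then show ?thesis by simp
next
  case MInf
  then show ?thesis using assms by simp
qed

lemma ext_exp_upper:
  assumes M: "prob_space M" and g: "g \<in> borel_measurable M" and K: "0 \<le> K"
  shows "ext_expectation M g \<le> enn2ereal (\<integral>\<^sup>+x. e2ennreal (g x + ereal K) \<partial>M) - ereal K"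
proof -
  interpret prob_space M by fact
  define p where "p = (\<integral>\<^sup>+x. e2ennreal (g x) \<partial>M)"
  define n where "n = (\<integral>\<^sup>+x. e2ennreal (- g x) \<partial>M)"
  define q where "q = (\<integral>\<^sup>+x. e2ennreal (g x + ereal K) \<partial>M)"
  have E: "ext_expectation M g = (if p = \<infinity> then \<infinity> else enn2ereal p - enn2ereal n)"
    unfolding ext_expectation_def p_def n_def Let_def by simp
  have cK: "(\<integral>\<^sup>+x. ennreal K \<partial>M) = ennreal K"
    by (simp add: emeasure_space_1)
  have "p + ennreal K = (\<integral>\<^sup>+x. e2ennreal (g x) + ennreal K \<partial>M)"
    unfolding p_def by (simp add: nn_integral_add meas_aux[OF g] cK emeasure_space_1)
  also have "\<dots> \<le> (\<integral>\<^sup>+x. e2ennreal (g x + ereal K) + e2ennreal (- g x) \<partial>M)"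
    by (rule nn_integral_mono) (rule pw2[OF K])
  also have "\<dots> = q + n"
    unfolding q_def n_def by (rule nn_integral_add) (simp_all add: meas_aux[OF g])
  finally have ineq: "p + ennreal K \<le> q + n" .
  have pq: "p \<le> q" unfolding p_def q_def
    by (rule nn_integral_mono, rule e2ennreal_mono) (use K in \<open>simp add: ereal_le_add_self\<close>)
  show ?thesis
  proof (cases "p = \<infinity>")
    case True
    then have "q = \<infinity>" using pq by (simp add: top_unique)
    then show ?thesis unfolding q_def[symmetric] by simp
  next
    case False
    then obtain a where a: "enn2ereal p = ereal a" "0 \<le> a"
      by (cases p) auto
    have ineq': "ereal a + ereal K \<le> enn2ereal q + enn2ereal n"
      using ineq a K by (simp add: less_eq_ennreal.rep_eq plus_ennreal.rep_eq)
    have R: "ext_expectation M g = ereal a - enn2ereal n"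
      by (simp only: E if_not_P[OF False] a)
    have "ext_expectation M g \<le> enn2ereal q - ereal K"
      unfolding R by (rule gl2) (use ineq' in auto)
    then show ?thesis by (simp only: q_def)
  qed
qed

definition Iinf :: "(nat \<Rightarrow> 'a::metric_space \<Rightarrow> ereal) \<Rightarrow> nat \<Rightarrow> real \<Rightarrow> 'a \<Rightarrow> ereal" where
  "Iinf h N \<delta> \<xi> = (INF p \<in> {(\<nu>, \<zeta>). \<nu> \<ge> N \<and> dist \<zeta> \<xi> < \<delta>}. h (fst p) (snd p))"

lemma epi_Iinf: "epi_liminf h \<xi> = (SUP \<delta>\<in>{0<..}. SUP N. Iinf h N \<delta> \<xi>)"
  unfolding epi_liminf_def Iinf_def ..

lemma Iinf_mono:
  assumes "N \<le> N'" "dist \<xi>' \<xi> + \<delta>' \<le> \<delta>"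
  shows "Iinf h N \<delta> \<xi> \<le> Iinf h N' \<delta>' \<xi>'"
  unfolding Iinf_def
proof (rule INF_superset_mono)
  show "{(\<nu>, \<zeta>). N' \<le> \<nu> \<and> dist \<zeta> \<xi>' < \<delta>'} \<subseteq> {(\<nu>, \<zeta>). N \<le> \<nu> \<and> dist \<zeta> \<xi> < \<delta>}"
  proof (clarsimp)
    fix \<nu> \<zeta> assume "N' \<le> \<nu>" "dist \<zeta> \<xi>' < \<delta>'"
    moreover have "dist \<zeta> \<xi> \<le> dist \<zeta> \<xi>' + dist \<xi>' \<xi>" by (rule dist_triangle)
    ultimately show "N \<le> \<nu> \<and> dist \<zeta> \<xi> < \<delta>" using assms by linarith
  qed
qed simp

lemma Iinf_le: "N \<le> \<nu> \<Longrightarrow> 0 < \<delta> \<Longrightarrow> Iinf h N \<delta> \<xi> \<le> h \<nu> \<xi>"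
  unfolding Iinf_def by (rule INF_lower2[of "(\<nu>, \<xi>)"]) auto

lemma Iinf_le_epi: "0 < \<delta> \<Longrightarrow> Iinf h N \<delta> \<xi> \<le> epi_liminf h \<xi>"
  unfolding epi_Iinf by (rule SUP_upper2[of \<delta>]) (auto intro: SUP_upper)

lemma epi_less: "y < epi_liminf h \<xi> \<Longrightarrow> \<exists>\<delta>>0. \<exists>N. y < Iinf h N \<delta> \<xi>"
  unfolding epi_Iinf by (auto simp: less_SUP_iff)

lemma epi_open: "open {\<xi>. y < epi_liminf h \<xi>}"
  unfolding open_contains_ball
proof safe
  fix \<xi> assume "y < epi_liminf h \<xi>"
  then obtain \<delta> N where d: "0 < \<delta>" "y < Iinf h N \<delta> \<xi>" using epi_less by blast
  show "\<exists>e>0. ball \<xi> e \<subseteq> {\<xi>. y < epi_liminf h \<xi>}"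
  proof (intro exI conjI)
    show "0 < \<delta>/2" using d by simp
    show "ball \<xi> (\<delta>/2) \<subseteq> {\<xi>. y < epi_liminf h \<xi>}"
    proof
      fix \<xi>' assume "\<xi>' \<in> ball \<xi> (\<delta>/2)"
      then have "dist \<xi>' \<xi> + \<delta>/2 \<le> \<delta>" by (simp add: dist_commute)
      then have "Iinf h N \<delta> \<xi> \<le> Iinf h N (\<delta>/2) \<xi>'" by (intro Iinf_mono) auto
      also have "\<dots> \<le> epi_liminf h \<xi>'" by (rule Iinf_le_epi) (use d in simp)
      finally show "\<xi>' \<in> {\<xi>. y < epi_liminf h \<xi>}" using d by simp
    qed
  qed
qed

lemma epi_meas: "epi_liminf h \<in> borel_measurable borel"
  by (rule borel_measurableI_greater) (simp add: epi_open)

definition Tcl :: "(nat \<Rightarrow> 'a::metric_space \<Rightarrow> ereal) \<Rightarrow> real \<Rightarrow> nat \<Rightarrow> 'a \<Rightarrow> ereal" where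
  "Tcl h K m \<zeta> = max 0 (min (Iinf h m (1 / (real m + 1)) \<zeta> + ereal K) (ereal (real m)))"

definition tcl :: "(nat \<Rightarrow> 'a::metric_space \<Rightarrow> ereal) \<Rightarrow> real \<Rightarrow> nat \<Rightarrow> 'a \<Rightarrow> real" where
  "tcl h K m \<zeta> = real_of_ereal (Tcl h K m \<zeta>)"

definition psi :: "(nat \<Rightarrow> 'a::metric_space \<Rightarrow> ereal) \<Rightarrow> real \<Rightarrow> nat \<Rightarrow> 'a \<Rightarrow> real" where
  "psi h K m \<xi> = Inf (range (\<lambda>\<zeta>. tcl h K m \<zeta> + real m * dist \<xi> \<zeta>))"

lemma Tcl_bounds: "0 \<le> Tcl h K m \<zeta>" "Tcl h K m \<zeta> \<le> ereal (real m)"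
  unfolding Tcl_def by auto

lemma Tcl_tcl: "ereal (tcl h K m \<zeta>) = Tcl h K m \<zeta>"
  using Tcl_bounds[of h K m \<zeta>] unfolding tcl_def
  by (cases "Tcl h K m \<zeta>") auto

lemma tcl_bounds: "0 \<le> tcl h K m \<zeta>" "tcl h K m \<zeta> \<le> real m"
  using Tcl_bounds[of h K m \<zeta>] Tcl_tcl[of h K m \<zeta>] by (metis ereal_less_eq(3) zero_ereal_def, metis ereal_less_eq(3))

lemma psi_bdd: "bdd_below (range (\<lambda>\<zeta>. tcl h K m \<zeta> + real m * dist \<xi> \<zeta>))"
  by (rule bdd_belowI[of _ 0]) (auto intro: add_nonneg_nonneg tcl_bounds)

lemma psi_lower: "psi h K m \<xi> \<le> tcl h K m \<zeta> + real m * dist \<xi> \<zeta>"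
  unfolding psi_def by (rule cInf_lower[OF _ psi_bdd]) auto

lemma psi_greatest: "(\<And>\<zeta>. c \<le> tcl h K m \<zeta> + real m * dist \<xi> \<zeta>) \<Longrightarrow> c \<le> psi h K m \<xi>"
  unfolding psi_def by (rule cInf_greatest) auto

lemma psi_le_tcl: "psi h K m \<xi> \<le> tcl h K m \<xi>"
  using psi_lower[of h K m \<xi> \<xi>] by simp

lemma psi_nonneg: "0 \<le> psi h K m \<xi>"
  by (rule psi_greatest) (auto intro: add_nonneg_nonneg tcl_bounds)

lemma psi_le_m: "psi h K m \<xi> \<le> real m"
  using psi_le_tcl tcl_bounds order.trans by blast

lemma psi_lip1: "psi h K m \<xi> \<le> psi h K m \<xi>' + real m * dist \<xi> \<xi>'"
proof -
  have "psi h K m \<xi> - real m * dist \<xi> \<xi>' \<le> psi h K m \<xi>'"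
  proof (rule psi_greatest)
    fix \<zeta>
    have "psi h K m \<xi> \<le> tcl h K m \<zeta> + real m * dist \<xi> \<zeta>" by (rule psi_lower)
    moreover have "real m * dist \<xi> \<zeta> \<le> real m * dist \<xi>' \<zeta> + real m * dist \<xi> \<xi>'"
      using dist_triangle[of \<xi> \<zeta> \<xi>'] by (simp add: distrib_left[symmetric] mult_left_mono dist_commute)
    ultimately show "psi h K m \<xi> - real m * dist \<xi> \<xi>' \<le> tcl h K m \<zeta> + real m * dist \<xi>' \<zeta>"
      by linarith
  qed
  then show ?thesis by linarith
qed

lemma psi_cont: "continuous_on UNIV (psi h K m)"
proof (rule lipschitz_on_continuous_on)
  show "(real m)-lipschitz_on UNIV (psi h K m)"
  proof (rule lipschitz_onI)
    fix x y :: 'a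
    show "dist (psi h K m x) (psi h K m y) \<le> real m * dist x y"
      using psi_lip1[of h K m x y] psi_lip1[of h K m y x]
      by (simp add: dist_real_def dist_commute abs_le_iff)
  qed simp
qed

lemma psi_meas: "psi h K m \<in> borel_measurable borel"
  by (rule borel_measurable_continuous_onI[OF psi_cont])

lemma psi_bounded: "bounded (range (psi h K m))"
  unfolding bounded_iff
proof (intro exI[of _ "real m"] ballI)
  fix x assume "x \<in> range (psi h K m)"
  then obtain \<xi> where "x = psi h K m \<xi>" by auto
  then show "norm x \<le> real m" using psi_nonneg[of h K m \<xi>] psi_le_m[of h K m \<xi>] by simp
qed

lemma psi_below:
  assumes "m \<le> \<nu>"
  shows "ennreal (psi h K m \<xi>) \<le> e2ennreal (h \<nu> \<xi> + ereal K)"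
proof -
  have "ereal (psi h K m \<xi>) \<le> Tcl h K m \<xi>"
    using psi_le_tcl[of h K m \<xi>] Tcl_tcl[of h K m \<xi>] by (metis ereal_less_eq(3))
  also have "\<dots> \<le> max 0 (h \<nu> \<xi> + ereal K)"
    unfolding Tcl_def
  proof -
    have "Iinf h m (1 / (real m + 1)) \<xi> + ereal K \<le> h \<nu> \<xi> + ereal K"
      using Iinf_le[OF assms, of "1 / (real m + 1)" h \<xi>] by (intro add_right_mono) auto
    then show "max 0 (min (Iinf h m (1 / (real m + 1)) \<xi> + ereal K) (ereal (real m))) \<le> max 0 (h \<nu> \<xi> + ereal K)"
      by (intro max.mono) (auto intro: min.coboundedI1)
  qed
  finally have "ereal (psi h K m \<xi>) \<le> max 0 (h \<nu> \<xi> + ereal K)" .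
  then have "e2ennreal (ereal (psi h K m \<xi>)) \<le> e2ennreal (max 0 (h \<nu> \<xi> + ereal K))"
    by (rule e2ennreal_mono)
  also have "e2ennreal (max 0 (h \<nu> \<xi> + ereal K)) = e2ennreal (h \<nu> \<xi> + ereal K)"
    by (cases "0 \<le> h \<nu> \<xi> + ereal K") (auto simp: max_def e2ennreal_neg)
  finally show ?thesis by simp
qed

lemma psi_mono: "psi h K m \<xi> \<le> psi h K (Suc m) \<xi>"
proof (rule psi_greatest)
  fix \<zeta>
  have "Iinf h m (1 / (real m + 1)) \<zeta> \<le> Iinf h (Suc m) (1 / (real (Suc m) + 1)) \<zeta>"
    by (rule Iinf_mono) (auto simp: field_simps)
  then have "Tcl h K m \<zeta> \<le> Tcl h K (Suc m) \<zeta>"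
    unfolding Tcl_def by (intro max.mono min.mono add_right_mono) auto
  then have "tcl h K m \<zeta> \<le> tcl h K (Suc m) \<zeta>"
    using Tcl_tcl[of h K m \<zeta>] Tcl_tcl[of h K "Suc m" \<zeta>] by (metis ereal_less_eq(3))
  moreover have "real m * dist \<xi> \<zeta> \<le> real (Suc m) * dist \<xi> \<zeta>"
    by (intro mult_right_mono) auto
  ultimately have "tcl h K m \<zeta> + real m * dist \<xi> \<zeta> \<le> tcl h K (Suc m) \<zeta> + real (Suc m) * dist \<xi> \<zeta>"
    by linarith
  then show "psi h K m \<xi> \<le> tcl h K (Suc m) \<zeta> + real (Suc m) * dist \<xi> \<zeta>"
    using psi_lower[of h K m \<xi> \<zeta>] by linarith
qed

lemma psi_sup: "e2ennreal (epi_liminf h \<xi> + ereal K) \<le> (SUP m. ennreal (psi h K m \<xi>))"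
proof (rule dense_le)
  fix c assume c: "c < e2ennreal (epi_liminf h \<xi> + ereal K)"
  then have "c \<noteq> top" using top_greatest[of "e2ennreal (epi_liminf h \<xi> + ereal K)"] by auto
  then obtain c' where c': "c = ennreal c'" "0 \<le> c'" by (cases c rule: ennreal_cases) auto
  have "enn2ereal c < enn2ereal (e2ennreal (epi_liminf h \<xi> + ereal K))"
    using c by (simp add: less_ennreal.rep_eq)
  then have "ereal c' < max 0 (epi_liminf h \<xi> + ereal K)"
    using c' by (simp add: enn2ereal_e2ennreal_max)
  then have "ereal c' < epi_liminf h \<xi> + ereal K"
    using c' by (auto simp: max_def split: if_splits)
  then have "ereal (c' - K) < epi_liminf h \<xi>"
    by (cases "epi_liminf h \<xi>") auto
  then obtain \<delta> N where d: "0 < \<delta>" "ereal (c' - K) < Iinf h N \<delta> \<xi>"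
    using epi_less by blast
  obtain m :: nat where m: "max (real N) (max (2/\<delta>) (max c' (2*c'/\<delta>))) < real m"
    using reals_Archimedean2 by blast
  have mN: "N \<le> m" using m by simp
  have m2: "2/\<delta> < real m" using m by simp
  have mc: "c' < real m" using m by simp
  have m3: "2*c'/\<delta> < real m" using m by simp
  have md: "1 / (real m + 1) \<le> \<delta>/2"
  proof -
    have "2 < \<delta> * real m" using m2 d by (simp add: field_simps)
    then have "2 \<le> \<delta> * (real m + 1)" using d by (simp add: algebra_simps)
    then show ?thesis using d by (simp add: field_simps)
  qed
  have mc2: "c' < real m * (\<delta>/2)" using m3 d by (simp add: field_simps)
  have "c' \<le> psi h K m \<xi>"
  proof (rule psi_greatest)
    fix \<zeta>
    show "c' \<le> tcl h K m \<zeta> + real m * dist \<xi> \<zeta>"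
    proof (cases "dist \<xi> \<zeta> < \<delta>/2")
      case True
      have "Iinf h N \<delta> \<xi> \<le> Iinf h m (1 / (real m + 1)) \<zeta>"
        by (rule Iinf_mono[OF mN]) (use True md in \<open>simp add: dist_commute\<close>)
      then have "ereal (c' - K) < Iinf h m (1 / (real m + 1)) \<zeta>" using d by simp
      then have cI: "ereal c' < Iinf h m (1 / (real m + 1)) \<zeta> + ereal K"
        by (cases "Iinf h m (1 / (real m + 1)) \<zeta>") auto
      moreover have "(0::ereal) \<le> ereal c'" using c' by simp
      ultimately have "0 \<le> Iinf h m (1 / (real m + 1)) \<zeta> + ereal K"
        by (meson order.strict_trans1 less_imp_le)
      with cI have "ereal c' \<le> Tcl h K m \<zeta>"
        unfolding Tcl_def using mc by (auto simp: min_def max_def)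
      then have "c' \<le> tcl h K m \<zeta>" using Tcl_tcl[of h K m \<zeta>] by (metis ereal_less_eq(3))
      then show ?thesis by (simp add: add_increasing2)
    next
      case False
      then have "real m * (\<delta>/2) \<le> real m * dist \<xi> \<zeta>" by (intro mult_left_mono) auto
      then show ?thesis using mc2 tcl_bounds(1)[of h K m \<zeta>] by linarith
    qed
  qed
  then have "c \<le> ennreal (psi h K m \<xi>)" using c' by (simp add: ennreal_leI)
  also have "\<dots> \<le> (SUP m. ennreal (psi h K m \<xi>))" by (rule SUP_upper) simp
  finally show "c \<le> (SUP m. ennreal (psi h K m \<xi>))" .
qed

lemma psi_nn:
  assumes M: "prob_space M" and sM: "sets M = sets borel"
  shows "(\<integral>\<^sup>+x. ennreal (psi h K m x) \<partial>M) = ennreal (\<integral>x. psi h K m x \<partial>M)"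
proof -
  interpret prob_space M by fact
  have meas: "psi h K m \<in> borel_measurable M"
    using psi_meas by (simp add: measurable_cong_sets[OF sM refl])
  have int: "integrable M (psi h K m)"
    by (rule integrable_const_bound[where B="real m"])
       (use meas in \<open>auto intro!: AE_I2 simp: abs_le_iff psi_le_m\<close>,
        metis neg_le_0_iff_le of_nat_0_le_iff order.trans psi_nonneg)
  show ?thesis
    by (rule nn_integral_eq_integral[OF int]) (simp add: psi_nonneg)
qed

lemma ereal_add_strict_aux:
  fixes a b :: ereal
  shows "ereal x < a \<Longrightarrow> ereal z < b \<Longrightarrow> ereal (x + z) < a + b"
  by (cases a; cases b) auto

theorem theorem3p4:
  fixes Ps :: "nat \<Rightarrow> 'a::metric_space measure"
    and P :: "'a measure"
    and h :: "nat \<Rightarrow> 'a \<Rightarrow> ereal"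
  assumes sets_Ps: "\<And>\<nu>. sets (Ps \<nu>) = sets borel"
    and prob_Ps: "\<And>\<nu>. prob_space (Ps \<nu>)"
    and sets_P: "sets P = sets borel"
    and prob_P: "prob_space P"
    and weak: "weak_conv_measures Ps P"
    and meas_h: "\<And>\<nu>. h \<nu> \<in> borel_measurable borel"
    and tail: "Liminf at_top (\<lambda>K::real. liminf (\<lambda>\<nu>.
                 ext_expectation (Ps \<nu>) (\<lambda>x. if h \<nu> x \<le> - ereal K then h \<nu> x else 0))) = 0"
  shows "liminf (\<lambda>\<nu>. ext_expectation (Ps \<nu>) (h \<nu>)) \<ge> ext_expectation P (epi_liminf h)"
proof -
  define f where "f = epi_liminf h"
  have fmP: "f \<in> borel_measurable P"
    unfolding f_def using epi_meas by (simp add: measurable_cong_sets[OF sets_P refl])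
  have hm: "h \<nu> \<in> borel_measurable (Ps \<nu>)" for \<nu>
    using meas_h by (simp add: measurable_cong_sets[OF sets_Ps refl])
  have psiP: "psi h K m \<in> borel_measurable P" for K m
    using psi_meas by (simp add: measurable_cong_sets[OF sets_P refl])
  let ?E1 = "\<lambda>K \<nu>. ext_expectation (Ps \<nu>) (\<lambda>x. if h \<nu> x \<le> - ereal K then h \<nu> x else 0)"
  let ?L = "\<lambda>K. liminf (?E1 K)"
  show ?thesis unfolding f_def[symmetric] le_Liminf_iff
  proof (intro allI impI)
    fix y assume y: "y < ext_expectation P f"
    obtain r1 where r1: "y < ereal r1" "ereal r1 < ext_expectation P f"
      using ereal_dense2[OF y] by blast
    obtain r2 where r2: "ereal r1 < ereal r2" "ereal r2 < ext_expectation P f"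
      using ereal_dense2[OF r1(2)] by blast
    define \<epsilon> where "\<epsilon> = r2 - r1"
    have \<epsilon>: "0 < \<epsilon>" using r2 by (simp add: \<epsilon>_def)
    have "0 \<le> Liminf at_top ?L" using tail by simp
    then have "\<forall>\<^sub>F K in at_top. - ereal \<epsilon> < ?L K"
      unfolding le_Liminf_iff using \<epsilon> by simp
    moreover have "\<forall>\<^sub>F K in at_top. max 0 (- r2) \<le> (K::real)" by (rule eventually_ge_at_top)
    ultimately have "\<forall>\<^sub>F K in at_top. - ereal \<epsilon> < ?L K \<and> max 0 (- r2) \<le> K"
      by (rule eventually_conj)
    then obtain N where "\<forall>K\<ge>N. - ereal \<epsilon> < ?L K \<and> max 0 (- r2) \<le> K"
      unfolding eventually_at_top_linorder by blast
    then obtain K where K: "- ereal \<epsilon> < ?L K" "0 \<le> K" "- r2 \<le> K" by auto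
    have EP: "ext_expectation P f \<le> enn2ereal (\<integral>\<^sup>+x. e2ennreal (f x + ereal K) \<partial>P) - ereal K"
      by (rule ext_exp_upper[OF prob_P fmP K(2)])
    have "(\<integral>\<^sup>+x. e2ennreal (f x + ereal K) \<partial>P) \<le> (\<integral>\<^sup>+x. (SUP m. ennreal (psi h K m x)) \<partial>P)"
      by (rule nn_integral_mono) (unfold f_def, rule psi_sup)
    also have "\<dots> = (SUP m. \<integral>\<^sup>+x. ennreal (psi h K m x) \<partial>P)"
    proof (rule nn_integral_monotone_convergence_SUP)
      show "incseq (\<lambda>m x. ennreal (psi h K m x))"
        by (rule incseq_SucI, rule le_funI, rule ennreal_leI, rule psi_mono)
      show "\<And>m. (\<lambda>x. ennreal (psi h K m x)) \<in> borel_measurable P"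
        using psiP by measurable
    qed
    finally have le1: "(\<integral>\<^sup>+x. e2ennreal (f x + ereal K) \<partial>P) \<le> (SUP m. \<integral>\<^sup>+x. ennreal (psi h K m x) \<partial>P)" .
    define S where "S = (SUP m. \<integral>\<^sup>+x. ennreal (psi h K m x) \<partial>P)"
    have "ereal r2 < enn2ereal S - ereal K"
    proof -
      have "enn2ereal (\<integral>\<^sup>+x. e2ennreal (f x + ereal K) \<partial>P) \<le> enn2ereal S"
        using le1 unfolding S_def by (simp add: less_eq_ennreal.rep_eq)
      then have "enn2ereal (\<integral>\<^sup>+x. e2ennreal (f x + ereal K) \<partial>P) - ereal K \<le> enn2ereal S - ereal K"
        by (rule ereal_minus_mono) simp
      then show ?thesis using EP r2(2) by simp
    qed
    then have "ereal (r2 + K) < enn2ereal S" by (cases "enn2ereal S") auto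
    then have "ennreal (r2 + K) < S"
      using K by (simp add: less_ennreal.rep_eq)
    then obtain m where m: "ennreal (r2 + K) < (\<integral>\<^sup>+x. ennreal (psi h K m x) \<partial>P)"
      unfolding S_def by (auto simp: less_SUP_iff)
    then have mP: "r2 + K < (\<integral>x. psi h K m x \<partial>P)"
      unfolding psi_nn[OF prob_P sets_P] using K by (simp add: ennreal_less_iff)
    have "(\<lambda>\<nu>. \<integral>x. psi h K m x \<partial>Ps \<nu>) \<longlonglongrightarrow> (\<integral>x. psi h K m x \<partial>P)"
      using weak psi_cont psi_bounded unfolding weak_conv_measures_def by blast
    then have ev1: "\<forall>\<^sub>F \<nu> in sequentially. r2 + K < (\<integral>x. psi h K m x \<partial>Ps \<nu>)"
      using mP by (rule order_tendstoD(1))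
    have ev2: "\<forall>\<^sub>F \<nu> in sequentially. - ereal \<epsilon> < ?E1 K \<nu>"
      using le_Liminf_iff[THEN iffD1, OF order_refl[of "?L K"]] K(1) by blast
    have ev3: "\<forall>\<^sub>F \<nu> in sequentially. m \<le> \<nu>" by (rule eventually_ge_at_top)
    show "\<forall>\<^sub>F \<nu> in sequentially. y < ext_expectation (Ps \<nu>) (h \<nu>)"
      using ev1 ev2 ev3
    proof eventually_elim
      case (elim \<nu>)
      define Q where "Q = (\<integral>\<^sup>+x. e2ennreal (h \<nu> x + ereal K) \<partial>Ps \<nu>)"
      have "ennreal (\<integral>x. psi h K m x \<partial>Ps \<nu>) = (\<integral>\<^sup>+x. ennreal (psi h K m x) \<partial>Ps \<nu>)"
        by (rule psi_nn[OF prob_Ps sets_Ps, symmetric])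
      also have "\<dots> \<le> Q" unfolding Q_def
        by (rule nn_integral_mono) (rule psi_below[OF elim(3)])
      finally have q: "ennreal (\<integral>x. psi h K m x \<partial>Ps \<nu>) \<le> Q" .
      have "ereal (r2 + K) < ereal (\<integral>x. psi h K m x \<partial>Ps \<nu>)" using elim(1) by simp
      also have "\<dots> \<le> enn2ereal Q"
        using q elim(1) K by (simp add: less_eq_ennreal.rep_eq)
      finally have "ereal (r2 + K) < enn2ereal Q" .
      then have A: "ereal r2 < enn2ereal Q - ereal K" by (cases "enn2ereal Q") auto
      have "ereal r2 + ereal (- \<epsilon>) < (enn2ereal Q - ereal K) + ?E1 K \<nu>"
        using ereal_add_strict_aux[OF A, of "- \<epsilon>" "?E1 K \<nu>"] elim(2) by simp
      also have "\<dots> \<le> ext_expectation (Ps \<nu>) (h \<nu>)"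
        unfolding Q_def by (rule ext_exp_split[OF prob_Ps hm K(2)])
      finally have "ereal r1 < ext_expectation (Ps \<nu>) (h \<nu>)"
        by (simp add: \<epsilon>_def)
      then show ?case using r1(1) by simp
    qed
  qed
qed

end
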